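(* Let $a\geq b>0$, $k\geq 1$, and let $\alpha,\beta,t$ be real numbers with $\alpha+\beta t>0$. Then \[ \frac{ka\gamma-b\gamma}{k}+\frac{b}{k}\ln k + \frac{a-b}{\alpha+\beta t}+a\psi(\alpha+\beta t)-b\psi_k(\alpha+\beta t)\geq 0 . \]
   Context: $\gamma$ denotes the Euler–Mascheroni constant and $\psi(t)=\Gamma'(t)/\Gamma(t)$ is the digamma function for $t>0$, where $\Gamma$ is Euler's Gamma function. For $k>0$ and $t>0$, the $k$-Gamma function is $\Gamma_k(t)=\int_0^\infty e^{-x^k/k}x^{t-1}\,dx$, and $\psi_k(t)=\frac{d}{dt}\ln\Gamma_k(t)=\Gamma_k'(t)/\Gamma_k(t)$. *)

theory Defs
  imports "HOL-Analysis.Analysis"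
begin

definition Gamma_k :: "real \<Rightarrow> real \<Rightarrow> real" where
  "Gamma_k k t = (LBINT x:{0<..}. exp (- (x powr k) / k) * x powr (t - 1))"

definition psi_k :: "real \<Rightarrow> real \<Rightarrow> real" where
  "psi_k k t = deriv (\<lambda>s. ln (Gamma_k k s)) t"

end

theory Submission imports Defs "HOL-Analysis.Analysis" begin

lemma Gamma_lborel:
  assumes c: "c > (0::real)"
  shows "set_integrable lborel {0<..} (\<lambda>u. u powr (c - 1) * exp (- u))"
    and "(LBINT u:{0<..}. u powr (c - 1) * exp (- u)) = Gamma c"
proof -
  have "((\<lambda>t. t powr (c - 1) / exp t) has_integral Gamma c) {0..}"
    by (rule Gamma_integral_real) fact
  hence "((\<lambda>t. if t \<in> {0<..} then t powr (c - 1) / exp t else 0) 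
           has_integral Gamma c) {0..}"
    by (rule has_integral_spike [of "{0}", rotated 2]) auto
  hence hi: "((\<lambda>t. t powr (c - 1) / exp t) has_integral Gamma c) {0<..}"
    by (subst (asm) has_integral_restrict) auto
  have eq: "\<And>u. u powr (c - 1) * exp (- u) = u powr (c - 1) / exp u"
    by (simp add: exp_minus field_simps)
  have hi': "((\<lambda>u. u powr (c - 1) * exp (- u)) has_integral Gamma c) {0<..}"
    using hi by (simp add: eq)
  have ai: "(\<lambda>u. u powr (c - 1) * exp (- u)) absolutely_integrable_on {0<..}"
    by (rule nonnegative_absolutely_integrable_1) (use hi' in auto)
  have meas: "(\<lambda>x. indicator {0<..} x *\<^sub>R (x powr (c - 1) * exp (- x))) \<in> borel_measurable lborel"
    by measurable
  show si: "set_integrable lborel {0<..} (\<lambda>u. u powr (c - 1) * exp (- u))"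
    using ai integrable_completion[OF meas]
    unfolding set_integrable_def by simp
  show "(LBINT u:{0<..}. u powr (c - 1) * exp (- u)) = Gamma c"
    using set_borel_integral_eq_integral(2)[OF si] hi' by (simp add: integral_unique)
qed

lemma Gamma_k_eq:
  assumes k: "k > (0::real)" and s: "s > 0"
  shows "Gamma_k k s = k powr (s/k - 1) * Gamma (s/k)"
proof -
  define g where "g u = (k*u) powr (1/k)" for u
  define g' where "g' u = (k*u) powr (1/k - 1)" for u
  define f where "f x = exp (- (x powr k) / k) * x powr (s - 1)" for x
  define C where "C = k powr (s/k - 1)"
  have sk: "s/k > 0" using s k by simp
  have fg: "f (g u) * g' u = C * (u powr (s/k - 1) * exp (-u))" if u: "u > 0" for u
  proof -
    have ku: "k*u > 0" using u k by simp
    have 1: "g u powr k = k*u" using ku k by (simp add: g_def powr_powr)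
    have "g u powr (s-1) * g' u = (k*u) powr ((s-1)/k) * (k*u) powr (1/k - 1)"
      using ku by (simp add: g_def g'_def powr_powr)
    also have "\<dots> = (k*u) powr (s/k - 1)"
      by (simp add: powr_add[symmetric] diff_divide_distrib)
    also have "\<dots> = C * u powr (s/k - 1)"
      using k u by (simp add: C_def powr_mult)
    finally have 2: "g u powr (s-1) * g' u = C * u powr (s/k - 1)" .
    have "f (g u) * g' u = exp (- u) * (g u powr (s-1) * g' u)"
      using k by (simp add: f_def 1)
    also have "\<dots> = C * (u powr (s/k - 1) * exp (-u))" by (simp add: 2)
    finally show ?thesis .
  qed
  have int: "set_integrable lborel (einterval 0 \<infinity>) (\<lambda>u. f (g u) * g' u)"
  proof -
    have "set_integrable lborel {0<..} (\<lambda>u. C * (u powr (s/k - 1) * exp (-u)))"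
      by (intro set_integrable_mult_right Gamma_lborel(1) sk)
    also have "?this \<longleftrightarrow> set_integrable lborel {0<..} (\<lambda>u. f (g u) * g' u)"
      by (intro set_integrable_cong) (auto simp: fg)
    finally show ?thesis by (simp add: zero_ereal_def)
  qed
  have deriv: "(g has_real_derivative g' x) (at x)" if "0 < ereal x" "ereal x < \<infinity>" for x
  proof -
    have x: "x > 0" using that by (simp add: zero_ereal_def)
    show ?thesis unfolding g_def g'_def using x k
      by (auto intro!: derivative_eq_intros simp: powr_diff field_simps)
  qed
  have contf: "isCont f (g x)" if "0 < ereal x" "ereal x < \<infinity>" for x
  proof -
    have x: "x > 0" using that by (simp add: zero_ereal_def)
    have "g x > 0" using x k by (simp add: g_def)
    thus ?thesis unfolding f_def using k by (auto intro!: continuous_intros)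
  qed
  have contg': "isCont g' x" if "0 < ereal x" "ereal x < \<infinity>" for x
  proof -
    have x: "x > 0" using that by (simp add: zero_ereal_def)
    thus ?thesis unfolding g'_def using k by (auto intro!: continuous_intros)
  qed
  have A: "((ereal \<circ> g \<circ> real_of_ereal) \<longlongrightarrow> 0) (at_right 0)"
  proof -
    have "(g \<longlongrightarrow> 0) (at_right 0)"
      unfolding g_def
      by (rule tendsto_zero_powrI) (auto intro!: tendsto_eq_intros eventually_at_rightI[of 0 1] simp: k less_imp_le)
    thus ?thesis by (simp add: zero_ereal_def ereal_tendsto_simps o_assoc[symmetric])
  qed
  have B: "((ereal \<circ> g \<circ> real_of_ereal) \<longlongrightarrow> \<infinity>) (at_left \<infinity>)"
  proof -
    have "filterlim (\<lambda>u. k*u) at_top at_top"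
      using k by (intro filterlim_tendsto_pos_mult_at_top[OF tendsto_const]) (auto simp: filterlim_ident)
    hence "filterlim (\<lambda>u. (1/k) * ln (k*u)) at_top at_top"
      using k by (intro filterlim_tendsto_pos_mult_at_top[OF tendsto_const _ filterlim_compose[OF ln_at_top]]) auto
    hence "filterlim (\<lambda>u. exp ((1/k) * ln (k*u))) at_top at_top"
      by (rule filterlim_compose[OF exp_at_top])
    moreover have "eventually (\<lambda>u. exp ((1/k) * ln (k*u)) = g u) at_top"
      using eventually_gt_at_top[of 0] by eventually_elim (use k in \<open>simp add: g_def powr_def\<close>)
    ultimately have "filterlim g at_top at_top"
      by (rule filterlim_cong[OF refl refl, THEN iffD1, rotated])
    thus ?thesis by (simp add: at_left_PInf filterlim_filtermap o_def tendsto_PInfty_eq_at_top)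
  qed
  have "(LBINT x=0..\<infinity>. f x) = (LBINT x=0..\<infinity>. (f (g x) * g' x))"
    by (rule interval_integral_substitution_nonneg(2)[OF _ deriv contf contg' _ _ A B int])
       (auto simp: f_def g'_def)
  hence "Gamma_k k s = (LBINT x:{0<..}. f (g x) * g' x)"
    by (simp add: Gamma_k_def f_def interval_lebesgue_integral_def zero_ereal_def)
  also have "\<dots> = (LBINT x:{0<..}. C * (x powr (s/k - 1) * exp (-x)))"
    by (intro set_lebesgue_integral_cong) (auto simp: fg)
  also have "\<dots> = C * Gamma (s/k)"
    by (simp add: set_integral_mult_right Gamma_lborel(2)[OF sk])
  finally show ?thesis by (simp add: C_def)
qed

lemma psi_k_eq:
  assumes k: "k > (0::real)" and x: "x > 0"
  shows "psi_k k x = ln k / k + Digamma (x/k) / k"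
proof -
  have ev: "eventually (\<lambda>s. ln (Gamma_k k s) = (s/k - 1) * ln k + ln_Gamma (s/k)) (nhds x)"
  proof -
    have "eventually (\<lambda>s. s \<in> {0<..}) (nhds x)"
      using x by (intro eventually_nhds_in_open) auto
    thus ?thesis
  proof (rule eventually_mono)
    fix s :: real assume "s \<in> {0<..}"
    hence s: "s > 0" by simp
    have g: "Gamma (s/k) > 0" using s k by (intro Gamma_real_pos) simp
    show "ln (Gamma_k k s) = (s/k - 1) * ln k + ln_Gamma (s/k)"
      using s k g \<open>Gamma (s/k) > 0\<close>[THEN less_imp_neq, symmetric] by (simp add: Gamma_k_eq ln_mult ln_powr ln_Gamma_real_pos)
  qed
  qed
  have "((\<lambda>s. (s/k - 1) * ln k + ln_Gamma (s/k)) has_real_derivative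
          (1/k) * ln k + Digamma (x/k) * (1/k)) (at x)"
    using k x by (auto intro!: derivative_eq_intros)
  hence "((\<lambda>s. ln (Gamma_k k s)) has_real_derivative
          (1/k) * ln k + Digamma (x/k) * (1/k)) (at x)"
    by (rule DERIV_cong_ev[OF refl ev[THEN eventually_mono, OF sym] refl, THEN iffD1, rotated])
  hence "psi_k k x = (1/k) * ln k + Digamma (x/k) * (1/k)"
    unfolding psi_k_def by (rule DERIV_imp_deriv)
  thus ?thesis by simp
qed

lemma F_props:
  assumes "y > (0::real)"
  shows "euler_mascheroni + Digamma y + 1 / y = euler_mascheroni + Digamma (y + 1)"
  using assms by (simp add: Digamma_plus1)

theorem lemma3p6:
  fixes a b k \<alpha> \<beta> t :: real
  assumes "a \<ge> b" "b > 0" "k \<ge> 1" "\<alpha> + \<beta> * t > 0"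
  shows "(k * a * euler_mascheroni - b * euler_mascheroni) / k + b / k * ln k
           + (a - b) / (\<alpha> + \<beta> * t) + a * Digamma (\<alpha> + \<beta> * t)
           - b * psi_k k (\<alpha> + \<beta> * t) \<ge> 0"
proof -
  define x where "x = \<alpha> + \<beta> * t"
  have x: "x > 0" and k: "k > 0" using assms by (auto simp: x_def)
  define F where "F y = euler_mascheroni + Digamma (y + 1)" for y :: real
  have Fx: "F x = euler_mascheroni + Digamma x + 1 / x" using F_props[OF x] by (simp add: F_def)
  have xk: "x / k > 0" using x k by simp
  have Fxk: "F (x/k) = euler_mascheroni + Digamma (x/k) + k / x"
    using F_props[OF xk] k by (simp add: F_def)
  have F0: "F (x/k) \<ge> 0"
  proof -
    have "Digamma (1::real) \<le> Digamma (x/k + 1)" using xk by (intro Digamma_real_mono) auto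
    thus ?thesis by (simp add: F_def)
  qed
  have Fmono: "F (x/k) \<le> F x"
  proof -
    have "x / k \<le> x" using x assms(3) by (simp add: divide_le_eq)
    hence "Digamma (x/k + 1) \<le> Digamma (x + 1)" using xk by (intro Digamma_real_mono) auto
    thus ?thesis by (simp add: F_def)
  qed
  have bk: "b / k \<le> a" using assms k by (simp add: divide_le_eq) (smt (verit) mult_le_cancel_left1)
  have "(b / k) * F (x/k) \<le> (b/k) * F x" using Fmono assms k by (intro mult_left_mono) auto
  also have "\<dots> \<le> a * F x" using bk F0 Fmono by (intro mult_right_mono) auto
  finally have main: "(b / k) * F (x/k) \<le> a * F x" .
  have eq: "(k * a * euler_mascheroni - b * euler_mascheroni) / k + b / k * ln k
           + (a - b) / x + a * Digamma x - b * psi_k k x = a * F x - (b / k) * F (x/k)"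
    using k x by (simp add: psi_k_eq Fx Fxk field_simps)
  show ?thesis using main eq by (simp add: x_def)
qed

end
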